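(* Let $1\le k\le d$ and let $\{U_1,\dots,U_k\}$ be a collection of independent open balls in $\mathbb R^d$. Then every interval $[\sigma,\tau]\subseteq 2^{[k]}$ is pierceable at some point in the realization $\{U_1,\dots,U_k\}$.
   Context: For sets $U_1,\dots,U_n\subseteq\mathbb R^d$, the atom of $\sigma\subseteq[n]$ is $\bigcap_{i\in\sigma}U_i\setminus\bigcup_{j\in[n]\setminus\sigma}U_j$ (empty intersection meaning $\mathbb R^d$), and the code of the collection is the set of $\sigma$ with nonempty atom; the collection realizes that code. A collection of open balls $\{U_1,\dots,U_k\}$ is independent if its code is all of $2^{[k]}$. For $\sigma\subseteq\tau$, $[\sigma,\tau]=\{\gamma:\sigma\subseteq\gamma\subseteq\tau\}$. Given a realization $\mathcal U$ of a code $\mathcal C$ in $\mathbb R^d$, an interval $[\sigma,\tau]\subseteq\mathcal C$ is pierceable at $p\in\mathbb R^d$ if the codewords whose atoms meet every sufficiently small neighborhood of $p$ are exactly those in $[\sigma,\tau]$; equivalently, $p$ is a limit point of the atom of every codeword in $[\sigma,\tau]$ and of no other atom. *)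

theory Defs
  imports "HOL-Analysis.Analysis"
begin

text \<open>Sets indexed by [n] = {1..n}. Atom of sigma: intersection over sigma
  (empty intersection = UNIV) minus union over the rest.\<close>
definition atom :: "(nat \<Rightarrow> 'a set) \<Rightarrow> nat \<Rightarrow> nat set \<Rightarrow> 'a set" where
  "atom U n \<sigma> = (\<Inter>i\<in>\<sigma>. U i) - (\<Union>j\<in>{1..n} - \<sigma>. U j)"

definition code :: "(nat \<Rightarrow> 'a set) \<Rightarrow> nat \<Rightarrow> nat set set" where
  "code U n = {\<sigma>. \<sigma> \<subseteq> {1..n} \<and> atom U n \<sigma> \<noteq> {}}"

definition independent_balls :: "(nat \<Rightarrow> 'a::metric_space set) \<Rightarrow> nat \<Rightarrow> bool" where
  "independent_balls U k \<longleftrightarrow>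
     (\<forall>i\<in>{1..k}. \<exists>c r. 0 < r \<and> U i = ball c r) \<and> code U k = Pow {1..k}"

definition interval :: "nat set \<Rightarrow> nat set \<Rightarrow> nat set set" where
  "interval \<sigma> \<tau> = {\<gamma>. \<sigma> \<subseteq> \<gamma> \<and> \<gamma> \<subseteq> \<tau>}"

definition pierceable_at ::
  "(nat \<Rightarrow> 'a::topological_space set) \<Rightarrow> nat \<Rightarrow> nat set \<Rightarrow> nat set \<Rightarrow> 'a \<Rightarrow> bool" where
  "pierceable_at U n \<sigma> \<tau> p \<longleftrightarrow>
     interval \<sigma> \<tau> \<subseteq> code U n \<and>
     {\<gamma> \<in> code U n. \<forall>N. open N \<and> p \<in> N \<longrightarrow> atom U n \<gamma> \<inter> N \<noteq> {}} = interval \<sigma> \<tau>"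

end

theory Submission
  imports Defs
begin


lemma norm2_convex2:
  fixes x y :: "'a::real_inner"
  assumes "0 \<le> s" "s \<le> 1"
  shows "norm ((1 - s) *\<^sub>R x + s *\<^sub>R y)^2 \<le> (1 - s) * norm x ^2 + s * norm y ^2"
proof -
  have "(1 - s) * norm x ^2 + s * norm y ^2 - norm ((1 - s) *\<^sub>R x + s *\<^sub>R y)^2
        = s * (1 - s) * norm (x - y)^2"
    by (simp only: power2_norm_eq_inner) (simp add: inner_simps algebra_simps inner_commute)
  moreover have "0 \<le> s * (1 - s) * norm (x - y)^2" using assms by simp
  ultimately show ?thesis by linarith
qed

lemma convex_norm2: "convex_on UNIV (\<lambda>x::'a::real_inner. norm x ^2)"
  unfolding convex_on_def
proof (intro conjI convex_UNIV ballI allI impI)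
  fix x y :: 'a and u v :: real
  assume "0 \<le> u" "0 \<le> v" "u + v = 1"
  then have "u = 1 - v" "v \<le> 1" by auto
  then show "norm (u *\<^sub>R x + v *\<^sub>R y)^2 \<le> u * norm x ^2 + v * norm y ^2"
    using norm2_convex2[of v x y] \<open>0 \<le> v\<close> by simp
qed

lemma lift_point:
  fixes u c1 ci x :: "'a::real_inner"
  assumes "norm u = 1" "inner (ci - c1) u = 0" "norm x ^2 \<le> T"
  shows "norm (x + (sqrt ((inner (x - c1) u)^2 + T - norm x^2) - inner (x - c1) u) *\<^sub>R u - ci)^2
         = T - 2 * inner ci x + norm ci ^2"
proof -
  define a where "a = inner (x - c1) u"
  define S where "S = sqrt (a^2 + T - norm x^2)"
  have "0 \<le> a^2 + T - norm x^2" using assms(3) zero_le_power2[of a] by linarith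
  then have S2: "S^2 = a^2 + T - norm x^2" unfolding S_def by simp
  have uu: "inner u u = 1" using assms(1) by (simp add: norm_eq_sqrt_inner)
  have xa: "inner (x - ci) u = a" unfolding a_def using assms(2)
    by (simp add: inner_simps)
  have "norm (x + (S - a) *\<^sub>R u - ci)^2 = norm ((x - ci) + (S - a) *\<^sub>R u)^2"
    by (simp add: algebra_simps)
  also have "\<dots> = norm (x - ci)^2 + 2 * (S - a) * inner (x - ci) u + (S - a)^2 * inner u u"
    by (simp only: power2_norm_eq_inner) (simp add: inner_simps algebra_simps power2_eq_square inner_commute)
  also have "\<dots> = norm (x - ci)^2 + S^2 - a^2" using xa uu by (simp add: power2_eq_square algebra_simps)
  also have "\<dots> = T - 2 * inner ci x + norm ci ^2" using S2
    by (simp only: power2_norm_eq_inner) (simp add: inner_simps algebra_simps inner_commute)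
  finally show ?thesis unfolding a_def S_def .
qed



lemma sum_Pow_insert:
  assumes "finite M" "a \<notin> M"
  shows "sum F (Pow (insert a M)) = sum F (Pow M) + (\<Sum>S\<in>Pow M. F (insert a S))"
proof -
  have inj: "inj_on (insert a) (Pow M)"
  proof (rule inj_onI)
    fix S S' assume "S \<in> Pow M" "S' \<in> Pow M" "insert a S = insert a S'"
    moreover have "a \<notin> S" "a \<notin> S'" using assms(2) calculation by auto
    ultimately show "S = S'" by (metis Diff_insert_absorb)
  qed
  have disj: "Pow M \<inter> insert a ` Pow M = {}" using assms(2) by auto
  have "sum F (Pow (insert a M)) = sum F (Pow M) + sum F (insert a ` Pow M)"
    unfolding Pow_insert using assms(1) disj by (simp add: sum.union_disjoint)
  also have "sum F (insert a ` Pow M) = (\<Sum>S\<in>Pow M. F (insert a S))"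
    using sum.reindex[OF inj] by simp
  finally show ?thesis .
qed

lemma orthant_comb:
  fixes M :: "'b set" and y :: "'b set \<Rightarrow> 'b \<Rightarrow> real"
  assumes "finite M"
    and "\<And>S i. S \<subseteq> M \<Longrightarrow> i \<in> S \<Longrightarrow> y S i < 0"
    and "\<And>S i. S \<subseteq> M \<Longrightarrow> i \<in> M \<Longrightarrow> i \<notin> S \<Longrightarrow> y S i > 0"
  shows "\<exists>l. (\<forall>S\<in>Pow M. 0 \<le> l S) \<and> sum l (Pow M) = 1 \<and>
             (\<forall>i\<in>M. (\<Sum>S\<in>Pow M. l S * y S i) = 0)"
  using assms
proof (induction M arbitrary: y rule: finite_induct)
  case empty
  show ?case by (rule exI[of _ "\<lambda>_. 1"]) simp
next
  case (insert a M)
  have "\<exists>l. (\<forall>S\<in>Pow M. 0 \<le> l S) \<and> sum l (Pow M) = 1 \<and>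
             (\<forall>i\<in>M. (\<Sum>S\<in>Pow M. l S * y S i) = 0)"
  proof (rule insert.IH)
    fix S i assume "S \<subseteq> M" "i \<in> S" then show "y S i < 0" using insert.prems(1) by blast
  next
    fix S i assume "S \<subseteq> M" "i \<in> M" "i \<notin> S" then show "y S i > 0" using insert.prems(2) by blast
  qed
  then obtain l1 where l1: "\<forall>S\<in>Pow M. 0 \<le> l1 S" "sum l1 (Pow M) = 1"
      "\<forall>i\<in>M. (\<Sum>S\<in>Pow M. l1 S * y S i) = 0" by blast
  have "\<exists>l. (\<forall>S\<in>Pow M. 0 \<le> l S) \<and> sum l (Pow M) = 1 \<and>
             (\<forall>i\<in>M. (\<Sum>S\<in>Pow M. l S * y (insert a S) i) = 0)"
  proof (rule insert.IH)
    fix S i assume "S \<subseteq> M" "i \<in> S" then show "y (insert a S) i < 0" using insert.prems(1)[of "insert a S" i] by blast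
  next
    fix S i assume "S \<subseteq> M" "i \<in> M" "i \<notin> S"
    moreover then have "i \<noteq> a" using insert.hyps by blast
    ultimately show "y (insert a S) i > 0" using insert.prems(2)[of "insert a S" i] by blast
  qed
  then obtain l2 where l2: "\<forall>S\<in>Pow M. 0 \<le> l2 S" "sum l2 (Pow M) = 1"
      "\<forall>i\<in>M. (\<Sum>S\<in>Pow M. l2 S * y (insert a S) i) = 0" by blast
  define A1 where "A1 = (\<Sum>S\<in>Pow M. l1 S * y S a)"
  define A2 where "A2 = (\<Sum>S\<in>Pow M. l2 S * y (insert a S) a)"
  have fin: "finite (Pow M)" using insert.hyps by simp
  have "\<exists>S\<in>Pow M. l1 S > 0"
  proof (rule ccontr)
    assume "\<not> (\<exists>S\<in>Pow M. l1 S > 0)"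
    then have "\<forall>S\<in>Pow M. l1 S = 0" using l1(1) by (meson linorder_not_le order_antisym)
    then have "sum l1 (Pow M) = 0" by simp
    with l1(2) show False by simp
  qed
  then obtain S1 where S1: "S1 \<in> Pow M" "l1 S1 > 0" by blast
  have "\<exists>S\<in>Pow M. l2 S > 0"
  proof (rule ccontr)
    assume "\<not> (\<exists>S\<in>Pow M. l2 S > 0)"
    then have "\<forall>S\<in>Pow M. l2 S = 0" using l2(1) by (meson linorder_not_le order_antisym)
    then have "sum l2 (Pow M) = 0" by simp
    with l2(2) show False by simp
  qed
  then obtain S2 where S2: "S2 \<in> Pow M" "l2 S2 > 0" by blast
  have ya1: "S \<in> Pow M \<Longrightarrow> y S a > 0" for S
  proof -
    assume S: "S \<in> Pow M"
    then have "S \<subseteq> insert a M" "a \<notin> S" using insert.hyps(2) by auto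
    then show ?thesis using insert.prems(2)[of S a] by blast
  qed
  have ya2: "S \<in> Pow M \<Longrightarrow> y (insert a S) a < 0" for S
  proof -
    assume S: "S \<in> Pow M"
    then have "insert a S \<subseteq> insert a M" by auto
    then show ?thesis using insert.prems(1)[of "insert a S" a] by blast
  qed
  have A1: "A1 > 0" unfolding A1_def
  proof (rule sum_pos2[OF fin S1(1)])
    show "0 < l1 S1 * y S1 a" using S1 ya1[OF S1(1)] by simp
    fix S assume "S \<in> Pow M"
    then show "0 \<le> l1 S * y S a" using l1(1) ya1[of S] by (simp add: less_imp_le)
  qed
  have "- A2 > 0" unfolding A2_def sum_negf[symmetric]
  proof (rule sum_pos2[OF fin S2(1)])
    show "0 < - (l2 S2 * y (insert a S2) a)" using S2 ya2[OF S2(1)] by (simp add: mult_pos_neg)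
    fix S assume "S \<in> Pow M"
    then have "0 \<le> l2 S" "y (insert a S) a \<le> 0" using l2(1) ya2[of S] by auto
    then show "0 \<le> - (l2 S * y (insert a S) a)" by (simp add: mult_nonneg_nonpos)
  qed
  then have A2: "A2 < 0" by simp
  define al where "al = A1 / (A1 - A2)"
  define be where "be = - A2 / (A1 - A2)"
  have al: "al > 0" and be: "be > 0" using A1 A2 unfolding al_def be_def by (auto simp: divide_neg_pos)
  have nz: "A1 - A2 \<noteq> 0" using A1 A2 by simp
  have ab: "al + be = 1" unfolding al_def be_def using nz
    by (simp add: diff_divide_distrib[symmetric])
  have ab0: "be * A1 + al * A2 = 0" unfolding al_def be_def using nz by (simp add: field_simps)
  define l where "l T = (if a \<in> T then al * l2 (T - {a}) else be * l1 T)" for T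
  have lM: "S \<in> Pow M \<Longrightarrow> l S = be * l1 S" for S using insert.hyps unfolding l_def by auto
  have lI: "S \<in> Pow M \<Longrightarrow> l (insert a S) = al * l2 S" for S
  proof -
    assume "S \<in> Pow M"
    then have "a \<notin> S" using insert.hyps by auto
    then have "insert a S - {a} = S" by auto
    then show ?thesis unfolding l_def by simp
  qed
  have split: "\<And>F. sum F (Pow (insert a M)) = sum F (Pow M) + (\<Sum>S\<in>Pow M. F (insert a S))"
    by (rule sum_Pow_insert[OF insert.hyps])
  show ?case
  proof (intro exI conjI ballI)
    fix T assume "T \<in> Pow (insert a M)"
    then have "T - {a} \<in> Pow M" "a \<notin> T \<Longrightarrow> T \<in> Pow M" by auto
    then show "0 \<le> l T" unfolding l_def using l1(1) l2(1) al be
      by (simp add: less_imp_le)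
  next
    have "sum l (Pow (insert a M)) = be * sum l1 (Pow M) + al * sum l2 (Pow M)"
    proof -
      have "sum l (Pow M) = (\<Sum>S\<in>Pow M. be * l1 S)" by (rule sum.cong) (simp_all add: lM)
      moreover have "(\<Sum>S\<in>Pow M. l (insert a S)) = (\<Sum>S\<in>Pow M. al * l2 S)" by (rule sum.cong) (simp_all add: lI)
      ultimately show ?thesis unfolding split by (simp add: sum_distrib_left)
    qed
    then show "sum l (Pow (insert a M)) = 1" using l1 l2 ab by simp
  next
    fix i assume i: "i \<in> insert a M"
    have "(\<Sum>T\<in>Pow (insert a M). l T * y T i) =
          be * (\<Sum>S\<in>Pow M. l1 S * y S i) + al * (\<Sum>S\<in>Pow M. l2 S * y (insert a S) i)"
    proof -
      have "(\<Sum>S\<in>Pow M. l S * y S i) = (\<Sum>S\<in>Pow M. be * (l1 S * y S i))" by (rule sum.cong) (simp_all add: lM)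
      moreover have "(\<Sum>S\<in>Pow M. l (insert a S) * y (insert a S) i) = (\<Sum>S\<in>Pow M. al * (l2 S * y (insert a S) i))" by (rule sum.cong) (simp_all add: lI)
      ultimately show ?thesis unfolding split by (simp add: sum_distrib_left)
    qed
    then show "(\<Sum>T\<in>Pow (insert a M). l T * y T i) = 0"
      using i l1 l2 ab0 unfolding A1_def A2_def by auto
  qed
qed



lemma strict_point:
  fixes c :: "nat \<Rightarrow> 'a::real_inner" and r :: "nat \<Rightarrow> real"
  assumes fin: "finite K"
    and indep: "\<And>J. J \<subseteq> K \<Longrightarrow> \<exists>y. \<forall>j\<in>J. dist y (c j) < r j"
    and x0in: "\<forall>i\<in>\<gamma>. dist x0 (c i) < r i" and x0out: "\<forall>i\<in>K-\<gamma>. r i \<le> dist x0 (c i)"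
  shows "\<exists>x. \<forall>i\<in>K. (i\<in>\<gamma> \<longrightarrow> dist x (c i) < r i) \<and> (i\<notin>\<gamma> \<longrightarrow> r i < dist x (c i))"
proof -
  define J where "J = {j\<in>K-\<gamma>. dist x0 (c j) = r j}"
  obtain y where y: "\<forall>j\<in>J. dist y (c j) < r j" using indep[of J] unfolding J_def by auto
  define v where "v = y - x0"
  have keyJ: "r j < dist (x0 - t *\<^sub>R v) (c j)" if j: "j\<in>J" and t: "t>0" for j t
  proof -
    have rj: "dist x0 (c j) = r j" using j unfolding J_def by auto
    have e1: "dist y (c j)^2 = dist x0 (c j)^2 + 2 * inner v (x0 - c j) + norm v^2"
    proof -
      have "y - c j = (x0 - c j) + v" unfolding v_def by simp
      then show ?thesis unfolding dist_norm
        by (simp only: power2_norm_eq_inner) (simp add: inner_simps inner_commute)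
    qed
    have "dist y (c j)^2 < r j ^2" using y j
      by (simp add: power_strict_mono)
    then have neg: "2 * inner v (x0 - c j) + norm v^2 < 0" using e1 rj by simp
    have e2: "dist (x0 - t *\<^sub>R v) (c j)^2 = dist x0 (c j)^2 - 2 * t * inner v (x0 - c j) + t^2 * norm v^2"
    proof -
      have "x0 - t *\<^sub>R v - c j = (x0 - c j) - t *\<^sub>R v" by simp
      then show ?thesis unfolding dist_norm
        by (simp only: power2_norm_eq_inner) (simp add: inner_simps inner_commute power2_eq_square algebra_simps)
    qed
    have "0 < - (2 * t * inner v (x0 - c j))"
    proof -
      have "inner v (x0 - c j) < 0" using neg zero_le_power2[of "norm v"] by linarith
      then show ?thesis using t by (simp add: mult_pos_neg)
    qed
    moreover have "0 \<le> t^2 * norm v^2" by simp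
    moreover have "dist (x0 - t *\<^sub>R v) (c j)^2 = r j^2 - 2 * t * inner v (x0 - c j) + t^2 * norm v^2"
      using e2 rj by simp
    ultimately have "r j ^2 < dist (x0 - t *\<^sub>R v) (c j)^2" by linarith
    then show ?thesis by (rule power2_less_imp_less) simp
  qed
  have ev: "\<forall>i\<in>K. eventually (\<lambda>t. (i\<in>\<gamma> \<longrightarrow> dist (x0 - t *\<^sub>R v) (c i) < r i) \<and>
              (i\<notin>\<gamma> \<longrightarrow> r i < dist (x0 - t *\<^sub>R v) (c i))) (at_right (0::real))"
  proof
    fix i assume i: "i\<in>K"
    have "((\<lambda>t. dist (x0 - t *\<^sub>R v) (c i)) \<longlongrightarrow> dist (x0 - 0 *\<^sub>R v) (c i)) (at_right (0::real))"
      by (intro tendsto_intros)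
    then have lim: "((\<lambda>t. dist (x0 - t *\<^sub>R v) (c i)) \<longlongrightarrow> dist x0 (c i)) (at_right (0::real))"
      by simp
    show "eventually (\<lambda>t. (i\<in>\<gamma> \<longrightarrow> dist (x0 - t *\<^sub>R v) (c i) < r i) \<and>
              (i\<notin>\<gamma> \<longrightarrow> r i < dist (x0 - t *\<^sub>R v) (c i))) (at_right (0::real))"
    proof (cases "i \<in> \<gamma>")
      case True
      then show ?thesis using order_tendstoD(2)[OF lim, of "r i"] x0in by simp
    next
      case False
      show ?thesis
      proof (cases "i \<in> J")
        case True
        show ?thesis using eventually_at_right_less[of "0::real"]
          by eventually_elim (use True False keyJ in auto)
      next
        case nJ: False
        then have "r i < dist x0 (c i)" using x0out i False unfolding J_def by force
        then show ?thesis using order_tendstoD(1)[OF lim, of "r i"] False by simp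
      qed
    qed
  qed
  have "eventually (\<lambda>t. \<forall>i\<in>K. (i\<in>\<gamma> \<longrightarrow> dist (x0 - t *\<^sub>R v) (c i) < r i) \<and>
              (i\<notin>\<gamma> \<longrightarrow> r i < dist (x0 - t *\<^sub>R v) (c i))) (at_right (0::real))"
    by (rule eventually_ball_finite[OF fin ev])
  then obtain t where "\<forall>i\<in>K. (i\<in>\<gamma> \<longrightarrow> dist (x0 - t *\<^sub>R v) (c i) < r i) \<and>
              (i\<notin>\<gamma> \<longrightarrow> r i < dist (x0 - t *\<^sub>R v) (c i))"
    using eventually_happens'[OF trivial_limit_at_right_real] by blast
  then show ?thesis by blast
qed



lemma wavg_neg:
  fixes f l :: "'b \<Rightarrow> real"
  assumes "finite A" "\<forall>a\<in>A. 0 \<le> l a" "sum l A = 1" "\<forall>a\<in>A. f a < 0"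
  shows "(\<Sum>a\<in>A. l a * f a) < 0"
proof -
  have "\<exists>a\<in>A. l a > 0"
  proof (rule ccontr)
    assume "\<not> (\<exists>a\<in>A. l a > 0)"
    then have "\<forall>a\<in>A. l a = 0" using assms(2) by (meson linorder_not_le order_antisym)
    then have "sum l A = 0" by simp
    with assms(3) show False by simp
  qed
  then obtain a0 where a0: "a0 \<in> A" "l a0 > 0" by blast
  have "0 < (\<Sum>a\<in>A. - (l a * f a))"
  proof (rule sum_pos2[OF assms(1) a0(1)])
    show "0 < - (l a0 * f a0)" using a0 assms(4) by (simp add: mult_pos_neg)
    fix a assume "a \<in> A"
    then have "0 \<le> l a" "f a \<le> 0" using assms(2,4) by auto
    then show "0 \<le> - (l a * f a)" by (simp add: mult_nonneg_nonpos)
  qed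
  then show ?thesis by (simp add: sum_negf)
qed

lemma wavg_pos:
  fixes f l :: "'b \<Rightarrow> real"
  assumes "finite A" "\<forall>a\<in>A. 0 \<le> l a" "sum l A = 1" "\<forall>a\<in>A. f a > 0"
  shows "(\<Sum>a\<in>A. l a * f a) > 0"
  using wavg_neg[OF assms(1-3), of "\<lambda>a. - f a"] assms(4) by (simp add: sum_negf)


definition liftp :: "'a::real_inner \<Rightarrow> 'a \<Rightarrow> 'a \<Rightarrow> real \<Rightarrow> 'a" where
  "liftp u c1 x T = x + (sqrt ((inner (x - c1) u)^2 + T - norm x^2) - inner (x - c1) u) *\<^sub>R u"

lemma affine_H:
  fixes x x' ci :: "'a::real_inner"
  shows "((1 - s) * T + s * T') - 2 * inner ci ((1 - s) *\<^sub>R x + s *\<^sub>R x') + norm ci ^2 - rr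
       = (1 - s) * (T - 2 * inner ci x + norm ci ^2 - rr) + s * (T' - 2 * inner ci x' + norm ci ^2 - rr)"
  by (simp add: inner_simps algebra_simps)

lemma H_point:
  fixes x ci :: "'a::real_inner"
  shows "norm x ^2 - 2 * inner ci x + norm ci ^2 - rr = dist x ci ^2 - rr"
  unfolding dist_norm by (simp only: power2_norm_eq_inner) (simp add: inner_simps inner_commute)

theorem lemma3p2:
  fixes U :: "nat \<Rightarrow> 'a::euclidean_space set" and k :: nat
  assumes "1 \<le> k" and "k \<le> DIM('a)"
    and "independent_balls U k"
    and "\<sigma> \<subseteq> \<tau>" and "\<tau> \<subseteq> {1..k}"
  shows "\<exists>p. pierceable_at U k \<sigma> \<tau> p"
proof -
  have "\<forall>i\<in>{1..k}. \<exists>c r. 0 < r \<and> U i = ball c r" and code: "code U k = Pow {1..k}"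
    using assms(3) unfolding independent_balls_def by auto
  then obtain c r where cr: "\<And>i. i \<in> {1..k} \<Longrightarrow> 0 < r i \<and> U i = ball (c i) (r i)"
    by metis
  have atom_iff: "z \<in> atom U k \<gamma> \<longleftrightarrow> (\<forall>i\<in>\<gamma>. z \<in> U i) \<and> (\<forall>j\<in>{1..k}-\<gamma>. z \<notin> U j)" for z \<gamma>
    unfolding atom_def by auto
  have atom_ne: "\<gamma> \<subseteq> {1..k} \<Longrightarrow> \<exists>z. z \<in> atom U k \<gamma>" for \<gamma>
    using code unfolding code_def by blast
  have inU: "i \<in> {1..k} \<Longrightarrow> z \<in> U i \<longleftrightarrow> dist z (c i) < r i" for i z
    using cr by (simp add: dist_commute)
  have "\<exists>x. \<forall>i\<in>{1..k}. (i\<in>\<gamma> \<longrightarrow> dist x (c i) < r i) \<and> (i\<notin>\<gamma> \<longrightarrow> r i < dist x (c i))"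
    if g: "\<gamma> \<subseteq> {1..k}" for \<gamma>
  proof -
    obtain x0 where x0: "x0 \<in> atom U k \<gamma>" using atom_ne[OF g] by blast
    show ?thesis
    proof (rule strict_point)
      show "finite {1..k}" by simp
      fix J assume J: "J \<subseteq> {1..k}"
      obtain y where "y \<in> atom U k J" using atom_ne[OF J] by blast
      then show "\<exists>y. \<forall>j\<in>J. dist y (c j) < r j" using J inU unfolding atom_iff by blast
    next
      show "\<forall>i\<in>\<gamma>. dist x0 (c i) < r i" using x0 g inU unfolding atom_iff by blast
      show "\<forall>i\<in>{1..k}-\<gamma>. r i \<le> dist x0 (c i)"
      proof
        fix i assume i: "i \<in> {1..k}-\<gamma>"
        then have "x0 \<notin> U i" using x0 unfolding atom_iff by blast
        then have "\<not> dist x0 (c i) < r i" using inU[of i x0] i by blast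
        then show "r i \<le> dist x0 (c i)" by simp
      qed
    qed
  qed
  then obtain X where X: "\<And>\<gamma>. \<gamma> \<subseteq> {1..k} \<Longrightarrow>
      \<forall>i\<in>{1..k}. (i\<in>\<gamma> \<longrightarrow> dist (X \<gamma>) (c i) < r i) \<and> (i\<notin>\<gamma> \<longrightarrow> r i < dist (X \<gamma>) (c i))"
    by metis
  define B where "B = (\<lambda>i. c i - c 1) ` {2..k}"
  have "dim B \<le> card B" unfolding B_def by (rule dim_le_card') simp
  also have "card B \<le> card {2..k}" unfolding B_def by (rule card_image_le) simp
  also have "\<dots> < DIM('a)" using assms(1,2) by simp
  finally obtain w where w: "w \<noteq> 0" "\<And>y. y \<in> span B \<Longrightarrow> orthogonal w y"
    using orthogonal_to_subspace_exists by blast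
  define u where "u = w /\<^sub>R norm w"
  have nu: "norm u = 1" unfolding u_def using w(1) by simp
  have orth: "inner (c i - c 1) u = 0" if "i \<in> {1..k}" for i
  proof (cases "i = 1")
    case True then show ?thesis by simp
  next
    case False
    then have "c i - c 1 \<in> span B" using that unfolding B_def by (intro span_base) auto
    then have "inner w (c i - c 1) = 0" using w(2) unfolding orthogonal_def by blast
    then show ?thesis unfolding u_def by (simp add: inner_commute)
  qed
  have liftd: "dist (liftp u (c 1) x T) (c i) ^2 - r i ^2 = T - 2 * inner (c i) x + norm (c i) ^2 - r i^2"
    if "i \<in> {1..k}" "norm x ^2 \<le> T" for i x T
    using lift_point[OF nu orth[OF that(1)] that(2)] unfolding liftp_def dist_norm by simp
  define M where "M = \<tau> - \<sigma>"
  have finM: "finite M" using assms(5) unfolding M_def by (meson finite_atLeastAtMost finite_subset Diff_subset subset_trans)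
  define Y where "Y S i = dist (X (\<sigma> \<union> S)) (c i) ^2 - r i ^2" for S i
  have sub: "S \<subseteq> M \<Longrightarrow> \<sigma> \<union> S \<subseteq> {1..k}" for S using assms(4,5) unfolding M_def by auto
  have Yneg: "Y S i < 0" if "S \<subseteq> M" "i \<in> \<sigma> \<union> S" for S i
  proof -
    have "i \<in> {1..k}" using sub[OF that(1)] that(2) by auto
    then have "dist (X (\<sigma> \<union> S)) (c i) < r i" using X[OF sub[OF that(1)]] that(2) by blast
    then show ?thesis unfolding Y_def by (simp add: power_strict_mono)
  qed
  have Ypos: "Y S i > 0" if "S \<subseteq> M" "i \<in> {1..k}" "i \<notin> \<sigma> \<union> S" for S i
  proof -
    have "r i < dist (X (\<sigma> \<union> S)) (c i)" using X[OF sub[OF that(1)]] that(2,3) by blast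
    moreover have "0 \<le> r i" using cr[OF that(2)] by simp
    ultimately show ?thesis unfolding Y_def by (simp add: power_strict_mono)
  qed
  obtain l where l: "\<forall>S\<in>Pow M. 0 \<le> l S" "sum l (Pow M) = 1" "\<forall>i\<in>M. (\<Sum>S\<in>Pow M. l S * Y S i) = 0"
  proof -
    have "\<exists>l. (\<forall>S\<in>Pow M. 0 \<le> l S) \<and> sum l (Pow M) = 1 \<and> (\<forall>i\<in>M. (\<Sum>S\<in>Pow M. l S * Y S i) = 0)"
    proof (rule orthant_comb[OF finM])
      fix S i assume "S \<subseteq> M" "i \<in> S" then show "Y S i < 0" using Yneg by blast
    next
      fix S i assume "S \<subseteq> M" "i \<in> M" "i \<notin> S"
      moreover have "i \<in> {1..k}" "i \<notin> \<sigma>" using \<open>i \<in> M\<close> assms(5) unfolding M_def by auto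
      ultimately show "Y S i > 0" using Ypos by blast
    qed
    then show ?thesis using that by blast
  qed
  define x0 where "x0 = (\<Sum>S\<in>Pow M. l S *\<^sub>R X (\<sigma> \<union> S))"
  define T0 where "T0 = (\<Sum>S\<in>Pow M. l S * norm (X (\<sigma> \<union> S)) ^2)"
  have J0: "norm x0 ^2 \<le> T0"
    unfolding x0_def T0_def
    by (rule convex_on_sum[OF _ _ convex_norm2]) (use finM l in auto)
  define H where "H i x T = T - 2 * inner (c i) x + norm (c i) ^2 - r i ^2" for i x T
  have H0: "H i x0 T0 = (\<Sum>S\<in>Pow M. l S * Y S i)" for i
  proof -
    have "(\<Sum>S\<in>Pow M. l S * Y S i) = (\<Sum>S\<in>Pow M. l S * H i (X (\<sigma> \<union> S)) (norm (X (\<sigma> \<union> S)) ^2))"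
      unfolding Y_def H_def by (simp only: H_point)
    also have "\<dots> = T0 - 2 * inner (c i) x0 + (norm (c i) ^2 - r i ^2) * sum l (Pow M)"
      unfolding H_def T0_def x0_def
      by (simp add: algebra_simps sum.distrib sum_subtractf sum_distrib_left sum_distrib_right inner_sum_right)
    finally show ?thesis using l(2) unfolding H_def by simp
  qed
  have Hs: "H i x0 T0 < 0" if "i \<in> \<sigma>" for i
    unfolding H0 by (rule wavg_neg[OF _ l(1,2)]) (use finM Yneg that in auto)
  have Ho: "H i x0 T0 > 0" if "i \<in> {1..k} - \<tau>" for i
    unfolding H0 proof (rule wavg_pos[OF _ l(1,2)])
    show "\<forall>S\<in>Pow M. 0 < Y S i" using Ypos that assms(4) unfolding M_def by auto
  qed (use finM in auto)
  have HM: "H i x0 T0 = 0" if "i \<in> M" for i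
    unfolding H0 using l(3) that by blast
  define p where "p = liftp u (c 1) x0 T0"
  have pd: "dist p (c i) ^2 - r i ^2 = H i x0 T0" if "i \<in> {1..k}" for i
    unfolding p_def H_def using liftd[OF that J0] by simp
  show ?thesis
  proof (intro exI)
    show "pierceable_at U k \<sigma> \<tau> p"
      unfolding pierceable_at_def
    proof (intro conjI)
      show ivc: "interval \<sigma> \<tau> \<subseteq> code U k" unfolding code interval_def using assms(5) by auto
      show "{\<gamma> \<in> code U k. \<forall>N. open N \<and> p \<in> N \<longrightarrow> atom U k \<gamma> \<inter> N \<noteq> {}} = interval \<sigma> \<tau>"
      proof (intro equalityI subsetI)
        fix \<gamma> assume "\<gamma> \<in> {\<gamma> \<in> code U k. \<forall>N. open N \<and> p \<in> N \<longrightarrow> atom U k \<gamma> \<inter> N \<noteq> {}}"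
        then have g: "\<gamma> \<subseteq> {1..k}" and gN: "\<And>N. open N \<Longrightarrow> p \<in> N \<Longrightarrow> atom U k \<gamma> \<inter> N \<noteq> {}"
          unfolding code by auto
        define N where "N = (\<Inter>i\<in>\<sigma>. ball (c i) (r i)) \<inter> (\<Inter>j\<in>{1..k}-\<tau>. - cball (c j) (r j))"
        have "open N" unfolding N_def
          using assms(4,5) by (intro open_Int open_INT) (auto intro: finite_subset)
        moreover have "p \<in> N"
        proof -
          have "dist (c i) p < r i" if "i \<in> \<sigma>" for i
          proof -
            have i: "i \<in> {1..k}" using that assms(4,5) by auto
            have "dist p (c i) ^2 < r i ^2" using pd[OF i] Hs[OF that] by simp
            then show ?thesis using cr[OF i] by (simp add: dist_commute power2_less_imp_less)
          qed
          moreover have "r j < dist (c j) p" if "j \<in> {1..k}-\<tau>" for j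
          proof -
            have j: "j \<in> {1..k}" using that by auto
            have "r j ^2 < dist p (c j) ^2" using pd[OF j] Ho[OF that] by simp
            then show ?thesis by (simp add: dist_commute power2_less_imp_less)
          qed
          ultimately show ?thesis unfolding N_def by (auto simp: not_le[symmetric])
        qed
        ultimately obtain z where z: "z \<in> atom U k \<gamma>" "z \<in> N" using gN by blast
        have "\<sigma> \<subseteq> \<gamma>"
        proof
          fix i assume i: "i \<in> \<sigma>"
          then have ik: "i \<in> {1..k}" using assms(4,5) by auto
          have "z \<in> U i" using z(2) i cr[OF ik] unfolding N_def by auto
          then show "i \<in> \<gamma>" using z(1) ik unfolding atom_iff by blast
        qed
        moreover have "\<gamma> \<subseteq> \<tau>"
        proof
          fix j assume j: "j \<in> \<gamma>"
          then have jk: "j \<in> {1..k}" using g by auto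
          have "z \<in> ball (c j) (r j)" using z(1) j cr[OF jk] unfolding atom_iff by auto
          show "j \<in> \<tau>"
          proof (rule ccontr)
            assume "j \<notin> \<tau>"
            then have "z \<notin> cball (c j) (r j)" using z(2) jk unfolding N_def by blast
            with \<open>z \<in> ball (c j) (r j)\<close> show False by auto
          qed
        qed
        ultimately show "\<gamma> \<in> interval \<sigma> \<tau>" unfolding interval_def by auto
      next
        fix \<gamma> assume gi: "\<gamma> \<in> interval \<sigma> \<tau>"
        then have gst: "\<sigma> \<subseteq> \<gamma>" "\<gamma> \<subseteq> \<tau>" unfolding interval_def by auto
        have gk: "\<gamma> \<subseteq> {1..k}" using gst assms(5) by auto
        define S where "S = \<gamma> - \<sigma>"
        have SM: "S \<subseteq> M" and gS: "\<sigma> \<union> S = \<gamma>" using gst unfolding S_def M_def by auto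
        define xs where "xs s = (1 - s) *\<^sub>R x0 + s *\<^sub>R X \<gamma>" for s
        define Ts where "Ts s = (1 - s) * T0 + s * norm (X \<gamma>) ^2" for s
        define q where "q s = liftp u (c 1) (xs s) (Ts s)" for s
        have Jq: "norm (xs s) ^2 \<le> Ts s" if "0 \<le> s" "s \<le> 1" for s
        proof -
          have "norm (xs s) ^2 \<le> (1 - s) * norm x0 ^2 + s * norm (X \<gamma>) ^2"
            unfolding xs_def by (rule norm2_convex2[OF that])
          also have "\<dots> \<le> Ts s" unfolding Ts_def using J0 that by (simp add: mult_left_mono)
          finally show ?thesis .
        qed
        have qd: "dist (q s) (c i) ^2 - r i ^2 = (1 - s) * H i x0 T0 + s * Y S i"
          if "0 \<le> s" "s \<le> 1" "i \<in> {1..k}" for s i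
        proof -
          have "dist (q s) (c i) ^2 - r i ^2 = H i (xs s) (Ts s)"
            unfolding q_def H_def using liftd[OF that(3) Jq[OF that(1,2)]] by simp
          also have "\<dots> = (1 - s) * H i x0 T0 + s * H i (X \<gamma>) (norm (X \<gamma>) ^2)"
            unfolding H_def xs_def Ts_def by (rule affine_H)
          also have "H i (X \<gamma>) (norm (X \<gamma>) ^2) = Y S i"
            unfolding H_def Y_def gS by (simp only: H_point)
          finally show ?thesis .
        qed
        have qatom: "q s \<in> atom U k \<gamma>" if s: "0 < s" "s < 1" for s
        proof -
          have inn: "dist (q s) (c i) < r i" if i: "i \<in> \<gamma>" for i
          proof -
            have ik: "i \<in> {1..k}" using i gk by auto
            have "(1 - s) * H i x0 T0 + s * Y S i < 0"
            proof (cases "i \<in> \<sigma>")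
              case True
              have "(1 - s) * H i x0 T0 < 0" using Hs[OF True] s by (simp add: mult_pos_neg)
              moreover have "Y S i < 0" using Yneg[OF SM, of i] True by blast
              then have "s * Y S i < 0" using s by (simp add: mult_pos_neg)
              ultimately show ?thesis by simp
            next
              case False
              then have "i \<in> M" using i gst unfolding M_def by auto
              then show ?thesis using HM Yneg[OF SM, of i] i gS s by (simp add: mult_pos_neg)
            qed
            then have "dist (q s) (c i) ^2 < r i ^2" using qd[of s i] s ik by simp
            then show ?thesis using cr[OF ik] by (simp add: power2_less_imp_less)
          qed
          have out: "r j < dist (q s) (c j)" if j: "j \<in> {1..k} - \<gamma>" for j
          proof -
            have jk: "j \<in> {1..k}" using j by auto
            have "(1 - s) * H i x0 T0 + s * Y S i > 0" if "i = j" for i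
            proof (cases "j \<in> \<tau>")
              case False
              then have "(1 - s) * H i x0 T0 > 0" using Ho[of j] jk s that by simp
              moreover have "s * Y S i > 0" using Ypos[OF SM, of i] jk that j gS s by simp
              ultimately show ?thesis by simp
            next
              case True
              then have "j \<in> M" using j gst unfolding M_def by auto
              then show ?thesis using HM Ypos[OF SM, of j] jk j gS s that by simp
            qed
            then have "r j ^2 < dist (q s) (c j) ^2" using qd[of s j] s jk by simp
            then show ?thesis by (simp add: power2_less_imp_less)
          qed
          show ?thesis unfolding atom_iff
          proof (intro conjI ballI)
            fix i assume "i \<in> \<gamma>" then show "q s \<in> U i" using inn inU gk by blast
          next
            fix j assume j: "j \<in> {1..k} - \<gamma>"
            then have "\<not> dist (q s) (c j) < r j" using out[OF j] by simp
            then show "q s \<notin> U j" using inU j by blast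
          qed
        qed
        have "((\<lambda>s. q s) \<longlongrightarrow> q 0) (at_right 0)"
          unfolding q_def liftp_def xs_def Ts_def by (intro tendsto_intros)
        moreover have "q 0 = p" unfolding q_def xs_def Ts_def p_def by simp
        ultimately have lim: "(q \<longlongrightarrow> p) (at_right 0)" by simp
        have "\<gamma> \<in> code U k" using gi ivc by blast
        moreover have "atom U k \<gamma> \<inter> N \<noteq> {}" if N: "open N" "p \<in> N" for N
        proof -
          have "eventually (\<lambda>s. q s \<in> N) (at_right 0)" using topological_tendstoD[OF lim N] .
          moreover have "eventually (\<lambda>s. (0::real) < s) (at_right 0)" by (rule eventually_at_right_less)
          moreover have "eventually (\<lambda>s. s < (1::real)) (at_right 0)"
            unfolding eventually_at_right_field by (intro exI[of _ "1::real"]) simp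
          ultimately have "eventually (\<lambda>s. q s \<in> N \<and> 0 < s \<and> s < 1) (at_right 0)"
            by eventually_elim auto
          then obtain s where "q s \<in> N" "0 < s" "s < 1"
            using eventually_happens'[OF trivial_limit_at_right_real] by blast
          then show ?thesis using qatom by blast
        qed
        ultimately show "\<gamma> \<in> {\<gamma> \<in> code U k. \<forall>N. open N \<and> p \<in> N \<longrightarrow> atom U k \<gamma> \<inter> N \<noteq> {}}"
          by blast
      qed
    qed
  qed
qed

end
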